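(* Let $\Phi$ be a real, additive gain graph on $\{1,\dots,n\}$ with edge set $E$, and let $\mathbf{Q}=(Q_1,\dots,Q_n)\in(\mathbb{E}^d)^n$ with $Q_i\neq Q_j$ whenever $i,j$ are adjacent. Suppose the intersection $s$ of all hyperplanes of $\mathcal{H}(\Phi;\mathbf{Q})$ is nonempty. Then (a) $\Phi$ is balanced (i.e. $E$ is balanced), and (b) $s$ is the intersection of some subset of $\mathcal{H}(\Phi;\mathbf{Q})$ consisting of $d-\dim s$ hyperplanes, and any subset of $d-\dim s$ hyperplanes whose intersection is $s$ corresponds to an edge set of $\Phi$ that is a forest (contains no circle).
   Context: $\mathbb{E}^d$ is Euclidean $d$-space with distance $d(\cdot,\cdot)$; $\psi_{ij}(P)=d(P,Q_i)^2-d(P,Q_j)^2$. A real, additive gain graph $\Phi$ on vertex set $\{1,\dots,n\}$ is a finite graph (multiple edges allowed, every edge with two distinct endpoints) with gains $\phi(e;i,j)\in\mathbb{R}$ for each edge $e$ with endpoints $i,j$, satisfying $\phi(e;j,i)=-\phi(e;i,j)$. An edge set is balanced if every circle (simple closed path) in it has gain sum $0$ when read in a consistent direction. The Pythagorean arrangement $\mathcal{H}(\Phi;\mathbf{Q})$ consists of the hyperplanes $h(e)=\{P:\psi_{ij}(P)=\phi(e;i,j)\}$, one for each edge $e$ with endpoints $i,j$; a subset of hyperplanes corresponds to the set of edges indexing it. *)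

theory Defs
  imports "HOL-Analysis.Analysis"
begin

text \<open>A real additive gain graph on vertex set {1..n}: a finite set E of edge names,
  an endpoint map ends (ends e = (i,j) with i \<noteq> j, an arbitrary reference orientation),
  and g e = phi(e;i,j) for ends e = (i,j).\<close>

definition gain :: "('e \<Rightarrow> nat \<times> nat) \<Rightarrow> ('e \<Rightarrow> real) \<Rightarrow> 'e \<Rightarrow> nat \<Rightarrow> nat \<Rightarrow> real" where
  "gain ends g e i j = (if ends e = (i, j) then g e else - g e)"

definition joins :: "('e \<Rightarrow> nat \<times> nat) \<Rightarrow> 'e \<Rightarrow> nat \<Rightarrow> nat \<Rightarrow> bool" where
  "joins ends e i j \<longleftrightarrow> ends e = (i, j) \<or> ends e = (j, i)"

definition is_circle :: "('e \<Rightarrow> nat \<times> nat) \<Rightarrow> 'e set \<Rightarrow> nat list \<Rightarrow> 'e list \<Rightarrow> bool" where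
  "is_circle ends F vs es \<longleftrightarrow>
     length vs = length es \<and> length vs \<ge> 1 \<and> distinct vs \<and> distinct es \<and> set es \<subseteq> F \<and>
     (\<forall>t < length vs. joins ends (es ! t) (vs ! t) (vs ! ((t + 1) mod length vs)))"

definition circle_gain :: "('e \<Rightarrow> nat \<times> nat) \<Rightarrow> ('e \<Rightarrow> real) \<Rightarrow> nat list \<Rightarrow> 'e list \<Rightarrow> real" where
  "circle_gain ends g vs es =
     (\<Sum>t < length vs. gain ends g (es ! t) (vs ! t) (vs ! ((t + 1) mod length vs)))"

definition balanced :: "('e \<Rightarrow> nat \<times> nat) \<Rightarrow> ('e \<Rightarrow> real) \<Rightarrow> 'e set \<Rightarrow> bool" where
  "balanced ends g F \<longleftrightarrow> (\<forall>vs es. is_circle ends F vs es \<longrightarrow> circle_gain ends g vs es = 0)"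

definition forest :: "('e \<Rightarrow> nat \<times> nat) \<Rightarrow> 'e set \<Rightarrow> bool" where
  "forest ends F \<longleftrightarrow> \<not> (\<exists>vs es. is_circle ends F vs es)"

definition psi :: "(nat \<Rightarrow> 'a::euclidean_space) \<Rightarrow> nat \<Rightarrow> nat \<Rightarrow> 'a \<Rightarrow> real" where
  "psi Q i j P = dist P (Q i) ^ 2 - dist P (Q j) ^ 2"

definition pyth_hyp :: "(nat \<Rightarrow> 'a::euclidean_space) \<Rightarrow> ('e \<Rightarrow> nat \<times> nat) \<Rightarrow> ('e \<Rightarrow> real) \<Rightarrow> 'e \<Rightarrow> 'a set" where
  "pyth_hyp Q ends g e = {P. psi Q (fst (ends e)) (snd (ends e)) P = g e}"

end

theory Submission
  imports Defs
begin

definition nrm :: "(nat \<Rightarrow> 'a::euclidean_space) \<Rightarrow> ('e \<Rightarrow> nat \<times> nat) \<Rightarrow> 'e \<Rightarrow> 'a" where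
  "nrm Q ends e = 2 *\<^sub>R (Q (snd (ends e)) - Q (fst (ends e)))"

definition rhs :: "(nat \<Rightarrow> 'a::euclidean_space) \<Rightarrow> ('e \<Rightarrow> nat \<times> nat) \<Rightarrow> ('e \<Rightarrow> real) \<Rightarrow> 'e \<Rightarrow> real" where
  "rhs Q ends g e = g e - (Q (fst (ends e)) \<bullet> Q (fst (ends e)) - Q (snd (ends e)) \<bullet> Q (snd (ends e)))"

lemma psi_lin: "psi Q i j P = 2 *\<^sub>R (Q j - Q i) \<bullet> P + (Q i \<bullet> Q i - Q j \<bullet> Q j)"
  by (simp add: psi_def dist_norm power2_norm_eq_inner inner_diff_left inner_diff_right
      inner_commute algebra_simps)

lemma hyp_eq: "pyth_hyp Q ends g e = {P. nrm Q ends e \<bullet> P = rhs Q ends g e}"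
  unfolding pyth_hyp_def nrm_def rhs_def psi_lin by auto

lemma tele:
  fixes f :: "nat \<Rightarrow> 'b::ab_group_add"
  assumes "k \<ge> 1"
  shows "(\<Sum>t<k. f t - f ((t+1) mod k)) = 0"
proof -
  obtain m where k: "k = Suc m" using assms by (cases k) auto
  have "(\<Sum>t<k. f ((t+1) mod k)) = (\<Sum>t<m. f (Suc t)) + f 0"
  proof -
    have "(\<Sum>t<Suc m. f ((t+1) mod Suc m)) = (\<Sum>t<m. f ((t+1) mod Suc m)) + f 0"
      by (simp add: lessThan_Suc)
    also have "(\<Sum>t<m. f ((t+1) mod Suc m)) = (\<Sum>t<m. f (Suc t))"
      by (rule sum.cong) auto
    finally show ?thesis using k by simp
  qed
  moreover have "(\<Sum>t<k. f t) = f 0 + (\<Sum>t<m. f (Suc t))"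
    unfolding k by (rule sum.lessThan_Suc_shift)
  ultimately show ?thesis by (simp add: sum_subtractf algebra_simps)
qed

lemma affdim_sol:
  fixes a :: "'e \<Rightarrow> 'a::euclidean_space"
  assumes P0: "P0 \<in> {P. \<forall>e\<in>F. a e \<bullet> P = b e}"
  shows "aff_dim {P. \<forall>e\<in>F. a e \<bullet> P = b e} = int DIM('a) - int (dim (a ` F))"
proof -
  define W where "W = {y. \<forall>e\<in>F. a e \<bullet> y = 0}"
  have WV: "W = {y \<in> UNIV. \<forall>x \<in> span (a ` F). orthogonal x y}"
  proof
    have "x \<bullet> y = 0" if y: "y \<in> W" and x: "x \<in> span (a ` F)" for x y
    proof -
      have "span (a ` F) \<subseteq> {x. x \<bullet> y = 0}"
        by (rule span_minimal) (use y W_def subspace_hyperplane2 in auto)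
      then show ?thesis using x by auto
    qed
    then show "W \<subseteq> {y \<in> UNIV. \<forall>x \<in> span (a ` F). orthogonal x y}"
      by (auto simp: orthogonal_def)
  next
    show "{y \<in> UNIV. \<forall>x \<in> span (a ` F). orthogonal x y} \<subseteq> W"
      by (auto simp: W_def orthogonal_def span_base)
  qed
  have sub: "subspace W"
    unfolding W_def subspace_def by (auto simp: inner_add_right)
  have "dim W + dim (span (a ` F)) = dim (UNIV :: 'a set)"
    unfolding WV by (rule dim_subspace_orthogonal_to_vectors) (auto simp: subspace_span)
  then have dW: "dim W = DIM('a) - dim (a ` F)" by simp
  have le: "dim (a ` F) \<le> DIM('a)"
    by (metis dim_subset_UNIV)
  have S: "{P. \<forall>e\<in>F. a e \<bullet> P = b e} = (+) P0 ` W"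
  proof
    show "{P. \<forall>e\<in>F. a e \<bullet> P = b e} \<subseteq> (+) P0 ` W"
    proof
      fix x assume x: "x \<in> {P. \<forall>e\<in>F. a e \<bullet> P = b e}"
      have "x - P0 \<in> W" using x P0 by (auto simp: W_def inner_diff_right)
      moreover have "x = P0 + (x - P0)" by simp
      ultimately show "x \<in> (+) P0 ` W" by blast
    qed
  next
    show "(+) P0 ` W \<subseteq> {P. \<forall>e\<in>F. a e \<bullet> P = b e}"
      using P0 by (auto simp: W_def inner_add_right)
  qed
  have "aff_dim {P. \<forall>e\<in>F. a e \<bullet> P = b e} = int (dim W)"
    unfolding S aff_dim_translation_eq using sub by (rule aff_dim_subspace)
  then show ?thesis using dW le by simp
qed

lemma circle_rel:
  fixes Q :: "nat \<Rightarrow> 'a::euclidean_space"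
  assumes "joins ends e i j"
  shows "Q j - Q i = (if ends e = (i, j) then 1/2 else - 1/2) *\<^sub>R nrm Q ends e"
  using assms by (auto simp: joins_def nrm_def)

lemma gain_rel:
  assumes "joins ends e i j" "P \<in> pyth_hyp Q ends g e"
  shows "gain ends g e i j = dist P (Q i) ^ 2 - dist P (Q j) ^ 2"
proof -
  from assms(2) have h: "psi Q (fst (ends e)) (snd (ends e)) P = g e" by (simp add: pyth_hyp_def)
  from assms(1) consider "ends e = (i, j)" | "ends e = (j, i)" "ends e \<noteq> (i, j)"
    unfolding joins_def by blast
  then show ?thesis
  proof cases
    case 1 then show ?thesis using h by (simp add: gain_def psi_def)
  next
    case 2 then show ?thesis using h by (simp add: gain_def psi_def)
  qed
qed

theorem lemma5p4:
  fixes n :: nat and E :: "'e set" and ends :: "'e \<Rightarrow> nat \<times> nat" and g :: "'e \<Rightarrow> real"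
    and Q :: "nat \<Rightarrow> 'a::euclidean_space"
  assumes finE: "finite E"
    and ends_in: "\<forall>e\<in>E. fst (ends e) \<in> {1..n} \<and> snd (ends e) \<in> {1..n}"
    and no_loops: "\<forall>e\<in>E. fst (ends e) \<noteq> snd (ends e)"
    and Q_adj: "\<forall>e\<in>E. Q (fst (ends e)) \<noteq> Q (snd (ends e))"
    and nonempty: "(\<Inter>e\<in>E. pyth_hyp Q ends g e) \<noteq> {}"
  shows "balanced ends g E
    \<and> (\<exists>F\<subseteq>E. int (card F) = int DIM('a) - aff_dim (\<Inter>e\<in>E. pyth_hyp Q ends g e)
              \<and> (\<Inter>e\<in>F. pyth_hyp Q ends g e) = (\<Inter>e\<in>E. pyth_hyp Q ends g e))
    \<and> (\<forall>F\<subseteq>E. int (card F) = int DIM('a) - aff_dim (\<Inter>e\<in>E. pyth_hyp Q ends g e)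
              \<and> (\<Inter>e\<in>F. pyth_hyp Q ends g e) = (\<Inter>e\<in>E. pyth_hyp Q ends g e)
              \<longrightarrow> forest ends F)"
proof -
  define a where "a = nrm Q ends"
  define b where "b = rhs Q ends g"
  have SI: "(\<Inter>e\<in>F. pyth_hyp Q ends g e) = {P. \<forall>e\<in>F. a e \<bullet> P = b e}" for F
    by (auto simp: hyp_eq a_def b_def)
  obtain P0 where P0: "P0 \<in> (\<Inter>e\<in>E. pyth_hyp Q ends g e)" using nonempty by blast
  have AD: "aff_dim (\<Inter>e\<in>E. pyth_hyp Q ends g e) = int DIM('a) - int (dim (a ` E))"
    unfolding SI by (rule affdim_sol) (use P0 SI in auto)
  have bal: "balanced ends g E"
    unfolding balanced_def
  proof (intro allI impI)
    fix vs es assume c: "is_circle ends E vs es"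
    define k where "k = length vs"
    define D where "D i = dist P0 (Q i) ^ 2" for i
    have "circle_gain ends g vs es = (\<Sum>t<k. D (vs ! t) - D (vs ! ((t+1) mod k)))"
      unfolding circle_gain_def k_def[symmetric]
    proof (rule sum.cong)
      fix t assume "t \<in> {..<k}"
      then have t: "t < k" by simp
      then have "es ! t \<in> E" using c by (auto simp: is_circle_def k_def)
      then have "P0 \<in> pyth_hyp Q ends g (es ! t)" using P0 by auto
      moreover have "joins ends (es ! t) (vs ! t) (vs ! ((t + 1) mod k))"
        using c t by (auto simp: is_circle_def k_def)
      ultimately show "gain ends g (es ! t) (vs ! t) (vs ! ((t + 1) mod k)) = D (vs ! t) - D (vs ! ((t+1) mod k))"
        unfolding D_def by (rule gain_rel[rotated])
    qed simp
    also have "\<dots> = 0" by (rule tele) (use c in \<open>auto simp: is_circle_def k_def\<close>)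
    finally show "circle_gain ends g vs es = 0" .
  qed
  have ex: "\<exists>F\<subseteq>E. int (card F) = int DIM('a) - aff_dim (\<Inter>e\<in>E. pyth_hyp Q ends g e)
              \<and> (\<Inter>e\<in>F. pyth_hyp Q ends g e) = (\<Inter>e\<in>E. pyth_hyp Q ends g e)"
  proof -
    obtain B where B: "B \<subseteq> a ` E" "independent B" "a ` E \<subseteq> span B" "card B = dim (a ` E)"
      using basis_exists by blast
    define f where "f v = (SOME e. e \<in> E \<and> a e = v)" for v
    have f: "f v \<in> E \<and> a (f v) = v" if "v \<in> B" for v
      unfolding f_def by (rule someI_ex) (use B(1) that in auto)
    define F where "F = f ` B"
    have FE: "F \<subseteq> E" using f by (auto simp: F_def)
    have inj: "inj_on f B" by (metis f inj_onI)
    have cF: "card F = card B" unfolding F_def by (rule card_image[OF inj])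
    have aF: "a ` F = B" using f by (force simp: F_def image_iff)
    have eq: "{P. \<forall>e\<in>F. a e \<bullet> P = b e} = {P. \<forall>e\<in>E. a e \<bullet> P = b e}"
    proof
      show "{P. \<forall>e\<in>F. a e \<bullet> P = b e} \<subseteq> {P. \<forall>e\<in>E. a e \<bullet> P = b e}"
      proof clarify
        fix P e assume PF: "\<forall>e\<in>F. a e \<bullet> P = b e" and e: "e \<in> E"
        have P0E: "\<forall>e\<in>E. a e \<bullet> P0 = b e" using P0 SI[of E] by simp
        have "span B \<subseteq> {x. x \<bullet> (P - P0) = 0}"
        proof (rule span_minimal)
          show "B \<subseteq> {x. x \<bullet> (P - P0) = 0}"
          proof
            fix v assume v: "v \<in> B"
            then have "f v \<in> F" by (simp add: F_def)
            then have h1: "a (f v) \<bullet> P = b (f v)" "a (f v) \<bullet> P0 = b (f v)"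
              using PF P0E FE by auto
            then show "v \<in> {x. x \<bullet> (P - P0) = 0}"
              using f[OF v] by (simp add: inner_diff_right)
          qed
        qed (rule subspace_hyperplane2)
        then have "a e \<bullet> (P - P0) = 0" using B(3) e by auto
        then show "a e \<bullet> P = b e" using P0E e by (simp add: inner_diff_right)
      qed
    qed (use FE in auto)
    show ?thesis
      by (rule exI[of _ F]) (use FE cF B(4) AD eq SI in auto)
  qed
  have fo: "\<forall>F\<subseteq>E. int (card F) = int DIM('a) - aff_dim (\<Inter>e\<in>E. pyth_hyp Q ends g e)
              \<and> (\<Inter>e\<in>F. pyth_hyp Q ends g e) = (\<Inter>e\<in>E. pyth_hyp Q ends g e)
              \<longrightarrow> forest ends F"
  proof (intro allI impI)
    fix F assume FE: "F \<subseteq> E" and H: "int (card F) = int DIM('a) - aff_dim (\<Inter>e\<in>E. pyth_hyp Q ends g e)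
              \<and> (\<Inter>e\<in>F. pyth_hyp Q ends g e) = (\<Inter>e\<in>E. pyth_hyp Q ends g e)"
    have finF: "finite F" using FE finE finite_subset by blast
    have "aff_dim (\<Inter>e\<in>F. pyth_hyp Q ends g e) = int DIM('a) - int (dim (a ` F))"
      unfolding SI by (rule affdim_sol) (use P0 SI H in auto)
    then have cd: "card F = dim (a ` F)" using H by simp
    have d1: "dim (a ` F) \<le> card (a ` F)"
      by (rule dim_le_card) (use finF in \<open>auto simp: span_superset\<close>)
    have d2: "card (a ` F) \<le> card F" by (rule card_image_le[OF finF])
    have injF: "inj_on a F"
      using eq_card_imp_inj_on[OF finF] cd d1 d2 by (metis le_antisym)
    have indF: "independent (a ` F)"
      using card_eq_dim[of "a ` F" "a ` F"] cd d1 d2 finF by (simp add: span_superset)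
    show "forest ends F"
      unfolding forest_def
    proof
      assume "\<exists>vs es. is_circle ends F vs es"
      then obtain vs es where c: "is_circle ends F vs es" by blast
      define k where "k = length vs"
      have k1: "k \<ge> 1" and lk: "length es = k" and des: "distinct es" and sF: "set es \<subseteq> F"
        using c by (auto simp: is_circle_def k_def)
      define sg where "sg t = (if ends (es ! t) = (vs ! t, vs ! ((t + 1) mod k)) then 1/2 else - 1/2 :: real)" for t
      have "(\<Sum>t<k. sg t *\<^sub>R a (es ! t)) = (\<Sum>t<k. Q (vs ! ((t+1) mod k)) - Q (vs ! t))"
      proof (rule sum.cong)
        fix t assume "t \<in> {..<k}"
        then have t: "t < k" by simp
        have j: "joins ends (es ! t) (vs ! t) (vs ! ((t + 1) mod k))"
          using c t by (auto simp: is_circle_def k_def)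
        show "sg t *\<^sub>R a (es ! t) = Q (vs ! ((t+1) mod k)) - Q (vs ! t)"
          using circle_rel[OF j, of Q] by (simp add: sg_def a_def)
      qed simp
      also have "\<dots> = - (\<Sum>t<k. Q (vs ! t) - Q (vs ! ((t+1) mod k)))"
        by (simp add: sum_negf[symmetric])
      also have "\<dots> = 0" using tele[OF k1] by simp
      finally have s0: "(\<Sum>t<k. sg t *\<^sub>R a (es ! t)) = 0" .
      define h where "h t = a (es ! t)" for t
      have injh: "inj_on h {..<k}"
      proof (rule inj_onI)
        fix x y assume x: "x \<in> {..<k}" and y: "y \<in> {..<k}" and hxy: "h x = h y"
        have "es ! x \<in> F" "es ! y \<in> F" using x y lk sF by auto
        then have "es ! x = es ! y" using injF hxy by (auto simp: h_def inj_on_def)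
        then show "x = y" using des x y lk by (simp add: nth_eq_iff_index_eq)
      qed
      define u where "u v = sg (inv_into {..<k} h v)" for v
      have "(\<Sum>v\<in>h ` {..<k}. u v *\<^sub>R v) = (\<Sum>t<k. sg t *\<^sub>R a (es ! t))"
        unfolding sum.reindex[OF injh] comp_def
        by (rule sum.cong) (simp_all add: u_def inv_into_f_f[OF injh], simp add: h_def)
      with s0 have s2: "(\<Sum>v\<in>h ` {..<k}. u v *\<^sub>R v) = 0" by simp
      have e0: "h 0 \<in> h ` {..<k}" using k1 by auto
      have "u (h 0) \<noteq> 0" using k1 by (simp add: u_def inv_into_f_f[OF injh] sg_def)
      then have "dependent (h ` {..<k})"
        using s2 e0 dependent_finite[of "h ` {..<k}"] by blast
      moreover have "h ` {..<k} \<subseteq> a ` F" using lk by (auto simp: h_def intro!: imageI subsetD[OF sF] nth_mem)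
      then have "independent (h ` {..<k})"
        using indF by (meson independent_mono)
      ultimately show False by simp
    qed
  qed
  show ?thesis using bal ex fo by blast
qed

end
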